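(* Let $a\in[0,\infty)$ and let $t:[0,1]\to[0,\infty]$ and $s:[0,\infty]\to[0,1]$ be continuous and increasing functions such that $G_{t,s}(x,y)=s(t(x)+t(y))$ defines a grouping function $G_{t,s}:[0,1]^2\to[0,1]$. Suppose $t(x)=\frac{a}{2}$ if and only if $x=0$. Then the following are equivalent: (1) $G_{t,s}$ is a t-conorm; (2) $0$ is a neutral element of $G_{t,s}$; (3) $s(t(x)+\frac{a}{2})=x$ for all $x\in[0,1]$.
   Context: "Increasing" means non-decreasing. Arithmetic in $[0,\infty]$ uses $c+\infty=\infty$; continuity on $[0,\infty]$ refers to the usual topology of the extended half-line. A grouping function is a map $G:[0,1]^2\to[0,1]$ that is (G1) commutative, (G2) $G(x,y)=0$ iff $x=y=0$, (G3) $G(x,y)=1$ iff $x=1$ or $y=1$, (G4) increasing in each variable, (G5) continuous. A t-conorm is a commutative, associative map $S:[0,1]^2\to[0,1]$, increasing in each variable, with $S(x,0)=x$ for all $x$. *)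

theory Defs
  imports "HOL-Analysis.Analysis" "HOL-Library.Extended_Nonnegative_Real"
begin

definition grouping_function :: "(real \<Rightarrow> real \<Rightarrow> real) \<Rightarrow> bool" where
  "grouping_function G \<longleftrightarrow>
     (\<forall>x\<in>{0..1}. \<forall>y\<in>{0..1}. G x y \<in> {0..1}) \<and>
     (\<forall>x\<in>{0..1}. \<forall>y\<in>{0..1}. G x y = G y x) \<and>
     (\<forall>x\<in>{0..1}. \<forall>y\<in>{0..1}. G x y = 0 \<longleftrightarrow> x = 0 \<and> y = 0) \<and>
     (\<forall>x\<in>{0..1}. \<forall>y\<in>{0..1}. G x y = 1 \<longleftrightarrow> x = 1 \<or> y = 1) \<and>
     (\<forall>x\<in>{0..1}. \<forall>x'\<in>{0..1}. \<forall>y\<in>{0..1}. x \<le> x' \<longrightarrow> G x y \<le> G x' y) \<and>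
     (\<forall>x\<in>{0..1}. \<forall>y\<in>{0..1}. \<forall>y'\<in>{0..1}. y \<le> y' \<longrightarrow> G x y \<le> G x y') \<and>
     continuous_on ({0..1} \<times> {0..1}) (\<lambda>(x, y). G x y)"

definition t_conorm :: "(real \<Rightarrow> real \<Rightarrow> real) \<Rightarrow> bool" where
  "t_conorm S \<longleftrightarrow>
     (\<forall>x\<in>{0..1}. \<forall>y\<in>{0..1}. S x y \<in> {0..1}) \<and>
     (\<forall>x\<in>{0..1}. \<forall>y\<in>{0..1}. S x y = S y x) \<and>
     (\<forall>x\<in>{0..1}. \<forall>y\<in>{0..1}. \<forall>z\<in>{0..1}. S (S x y) z = S x (S y z)) \<and>
     (\<forall>x\<in>{0..1}. \<forall>x'\<in>{0..1}. \<forall>y\<in>{0..1}. x \<le> x' \<longrightarrow> S x y \<le> S x' y) \<and>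
     (\<forall>x\<in>{0..1}. \<forall>y\<in>{0..1}. \<forall>y'\<in>{0..1}. y \<le> y' \<longrightarrow> S x y \<le> S x y') \<and>
     (\<forall>x\<in>{0..1}. S x 0 = x)"

definition neutral_element :: "real \<Rightarrow> (real \<Rightarrow> real \<Rightarrow> real) \<Rightarrow> bool" where
  "neutral_element e F \<longleftrightarrow> (\<forall>x\<in>{0..1}. F x e = x \<and> F e x = x)"

end

theory Submission
  imports Defs
begin

theorem theorem6p3:
  fixes a :: real and t :: "real \<Rightarrow> ennreal" and s :: "ennreal \<Rightarrow> real"
  assumes "a \<ge> 0"
    and "continuous_on {0..1} t" and "mono_on {0..1} t"
    and "continuous_on UNIV s" and "mono s" and "\<forall>u. s u \<in> {0..1}"
    and "grouping_function (\<lambda>x y. s (t x + t y))"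
    and "\<forall>x\<in>{0..1}. t x = ennreal (a / 2) \<longleftrightarrow> x = 0"
  shows "(t_conorm (\<lambda>x y. s (t x + t y)) \<longleftrightarrow> neutral_element 0 (\<lambda>x y. s (t x + t y))) \<and>
         (neutral_element 0 (\<lambda>x y. s (t x + t y)) \<longleftrightarrow>
            (\<forall>x\<in>{0..1}. s (t x + ennreal (a / 2)) = x))"
proof -
  define G where "G = (\<lambda>x y. s (t x + t y))"
  define c where "c = ennreal (a / 2)"
  have t0: "t 0 = c" using assms(8) c_def by auto
  have gf: "grouping_function G" using assms(7) G_def by simp
  note gdefs = gf[unfolded grouping_function_def]
  have N3: "neutral_element 0 G \<longleftrightarrow> (\<forall>x\<in>{0..1}. s (t x + c) = x)"
    unfolding neutral_element_def G_def t0 by (auto simp: add.commute)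
  have T1: "t_conorm G \<Longrightarrow> neutral_element 0 G"
    unfolding neutral_element_def t_conorm_def by auto
  have T2: "t_conorm G" if H: "\<forall>x\<in>{0..1}. s (t x + c) = x"
  proof -
    have key: "t (G x y) + c = t x + t y \<and> G x y < 1"
      if xy: "x \<in> {0..1}" "y \<in> {0..1}" "x < 1" "y < 1" for x y
    proof -
      define u where "u = t x + t y"
      have "G x y \<noteq> 1" using gdefs xy by auto
      moreover have "G x y \<le> 1" using gdefs xy by auto
      ultimately have lt: "G x y < 1" by simp
      have s1: "s (t 1 + c) = 1" using H by auto
      have "u < t 1 + c"
      proof (rule ccontr)
        assume "\<not> u < t 1 + c"
        then have "s (t 1 + c) \<le> s u" using assms(5) by (simp add: mono_def)
        then show False using s1 lt G_def u_def by simp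
      qed
      moreover have "c + c \<le> u"
        unfolding u_def t0[symmetric]
        by (intro add_mono; rule mono_onD[OF assms(3)]) (use xy in auto)
      moreover have conn: "connected ((\<lambda>w. t w + c) ` {0..1})"
        by (intro connected_continuous_image continuous_on_add assms(2) continuous_on_const) auto
      moreover have a1: "t 0 + c \<in> (\<lambda>w. t w + c) ` {0..1}" by auto
      moreover have a2: "t 1 + c \<in> (\<lambda>w. t w + c) ` {0..1}" by auto
      ultimately have "u \<in> (\<lambda>w. t w + c) ` {0..1}"
        using connectedD_interval[OF conn a1 a2, of u] t0 by simp
      then obtain w where w: "w \<in> {0..1}" "u = t w + c" by auto
      have "G x y = w" using H w G_def u_def by auto
      then show ?thesis using w lt u_def by simp
    qed
    have cfin: "c \<noteq> \<infinity>" using c_def by simp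
    have ran: "x \<in> {0..1} \<Longrightarrow> y \<in> {0..1} \<Longrightarrow> G x y \<in> {0..1}" for x y using gdefs by auto
    have one: "x \<in> {0..1} \<Longrightarrow> y \<in> {0..1} \<Longrightarrow> (x = 1 \<or> y = 1) \<Longrightarrow> G x y = 1" for x y
      using gdefs by auto
    have assoc: "G (G x y) z = G x (G y z)" if xyz: "x \<in> {0..1}" "y \<in> {0..1}" "z \<in> {0..1}" for x y z
    proof (cases "x = 1 \<or> y = 1 \<or> z = 1")
      case True
      have "G (G x y) z = 1"
        using True one ran xyz by (metis)
      moreover have "G x (G y z) = 1"
        using True one ran xyz by (metis)
      ultimately show ?thesis by simp
    next
      case False
      then have l: "x < 1" "y < 1" "z < 1" using xyz by auto
      define p where "p = G x y"
      define q where "q = G y z"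
      have p: "t p + c = t x + t y" "p < 1" "p \<in> {0..1}" using key[of x y] l xyz ran p_def by auto
      have q: "t q + c = t y + t z" "q < 1" "q \<in> {0..1}" using key[of y z] l xyz ran q_def by auto
      have v: "t (G p z) + c = t p + t z" using key[of p z] p l xyz by auto
      have v': "t (G x q) + c = t x + t q" using key[of x q] q l xyz by auto
      have "t (G p z) + c + c = t x + t y + t z" using v p by (metis add.assoc add.commute)
      moreover have "t (G x q) + c + c = t x + t y + t z" using v' q by (metis add.assoc add.commute)
      ultimately have "t (G p z) + (c + c) = t (G x q) + (c + c)" by (simp add: add.assoc)
      moreover have "c + c \<noteq> \<infinity>" using cfin by simp
      ultimately have "t (G p z) = t (G x q)" by (metis add.commute ennreal_add_left_cancel)
      then have "s (t (G p z) + c) = s (t (G x q) + c)" by simp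
      then show ?thesis using H ran p q xyz p_def q_def by auto
    qed
    have z: "\<forall>x\<in>{0..1}. G x 0 = x" using H unfolding G_def t0 by simp
    have g1: "\<forall>x\<in>{0..1}. \<forall>y\<in>{0..1}. G x y \<in> {0..1}" using ran by blast
    have g2: "\<forall>x\<in>{0..1}. \<forall>y\<in>{0..1}. G x y = G y x"
      by (rule gdefs[THEN conjunct2, THEN conjunct1])
    have g3: "\<forall>x\<in>{0..1}. \<forall>y\<in>{0..1}. \<forall>z\<in>{0..1}. G (G x y) z = G x (G y z)" using assoc by blast
    have g4: "\<forall>x\<in>{0..1}. \<forall>x'\<in>{0..1}. \<forall>y\<in>{0..1}. x \<le> x' \<longrightarrow> G x y \<le> G x' y"
      by (rule gdefs[THEN conjunct2, THEN conjunct2, THEN conjunct2, THEN conjunct2, THEN conjunct1])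
    have g5: "\<forall>x\<in>{0..1}. \<forall>y\<in>{0..1}. \<forall>y'\<in>{0..1}. y \<le> y' \<longrightarrow> G x y \<le> G x y'"
      by (rule gdefs[THEN conjunct2, THEN conjunct2, THEN conjunct2, THEN conjunct2, THEN conjunct2, THEN conjunct1])
    show ?thesis unfolding t_conorm_def using g1 g2 g3 g4 g5 z by (intro conjI)
  qed
  have "(t_conorm G \<longleftrightarrow> neutral_element 0 G) \<and> (neutral_element 0 G \<longleftrightarrow> (\<forall>x\<in>{0..1}. s (t x + c) = x))"
    using N3 T1 T2 by blast
  then show ?thesis unfolding G_def c_def .
qed

end
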